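(* Let $C_m=\frac{1}{m+1}\binom{2m}{m}$ denote the Catalan numbers, and for integers $n\ge0$ define $$E(n)=\frac{\sum_{j=0}^{\lfloor n/2\rfloor}C_{n-2j}\,C_{2j}}{\sum_{\ell=0}^{n}C_{n-\ell}\,C_{\ell}}.$$ Then (i) the sequence $m\mapsto E(2m)$, $m\ge0$, is decreasing; (ii) $E(2m+1)=\tfrac12$ for all $m\ge0$. Consequently, for all $m\ge4$, $E(m)\le\max\{E(4),\tfrac12\}=E(4)$. *)

theory Defs
  imports Complex_Main
begin

definition catalan :: "nat \<Rightarrow> real" where
  "catalan m = real (2*m choose m) / real (m + 1)"

definition E :: "nat \<Rightarrow> real" where
  "E n = (\<Sum>j=0..n div 2. catalan (n - 2*j) * catalan (2*j)) /
         (\<Sum>l=0..n. catalan (n - l) * catalan l)"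

end

theory Submission imports Defs "HOL-Computational_Algebra.Formal_Power_Series" begin

lemma aux_rec: fixes k A B D :: nat
  assumes "(k+1)*A = (2*k+2)*B" "(2*k+1)*D = B*(k+1)"
  shows "(k+1)*A = 2*(2*k+1)*D"
proof -
  have "(k+1)*((k+1)*A) = (k+1)*(2*(2*k+1)*D)"
  proof -
    have "(k+1)*((k+1)*A) = (k+1)*((2*k+2)*B)" using assms(1) by simp
    also have "\<dots> = 2*(B*(k+1))*(k+1)" by (simp add: algebra_simps)
    also have "\<dots> = 2*((2*k+1)*D)*(k+1)" using assms(2) by simp
    also have "\<dots> = (k+1)*(2*(2*k+1)*D)" by (simp add: algebra_simps)
    finally show ?thesis .
  qed
  then show ?thesis by (simp only: mult_cancel_left) simp
qed

lemma central_rec: "(k+1) * (2*(k+1) choose (k+1)) = 2*(2*k+1) * (2*k choose k)"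
proof -
  have 1: "Suc (k) * (Suc (2*k+1) choose Suc k) = Suc (2*k+1) * ((2*k+1) choose k)"
    by (rule Suc_times_binomial)
  have 2: "Suc (2*k) * (2*k choose k) = (Suc (2*k) choose Suc k) * Suc k"
    by (rule Suc_times_binomial_eq)
  have 3: "(Suc (2*k) choose Suc k) = (Suc (2*k) choose k)"
    using binomial_symmetric[of "Suc k" "Suc (2*k)"] by simp
  have e: "2*(k+1) = Suc (2*k+1)" by simp
  show ?thesis unfolding e
    by (rule aux_rec[where B="Suc (2*k) choose k"]) (use 1 2 3 in simp_all)
qed

lemma catalan_rec: "real (k+2) * catalan (k+1) = 2*(2*real k+1) * catalan k"
proof -
  have "real (k+2) * catalan (k+1) = real (2*(k+1) choose (k+1))"
    by (simp add: catalan_def)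
  also have "\<dots> = 2*(2*real k+1) * real (2*k choose k) / real (k+1)"
    using arg_cong[OF central_rec[of k], of real] by (simp add: field_simps)
  also have "\<dots> = 2*(2*real k+1) * catalan k" by (simp add: catalan_def)
  finally show ?thesis .
qed

lemma catalan_pos: "catalan n > 0"
  by (simp add: catalan_def)

lemma sum_even: fixes N :: nat shows "(\<Sum>i=0..N. if even i then g i else 0) = (\<Sum>j=0..N div 2. g (2*j))"
proof (induction N)
  case 0 then show ?case by simp
next
  case (Suc N)
  show ?case
  proof (cases "even N")
    case True
    then have "Suc N div 2 = N div 2" by presburger
    then show ?thesis using Suc True by simp
  next
    case False
    then have "Suc N div 2 = Suc (N div 2)" "2 * Suc (N div 2) = Suc N" by presburger+
    then show ?thesis using Suc False by simp
  qed
qed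

unbundle fps_syntax

definition sc :: "nat \<Rightarrow> real" where "sc n = (if n=0 then 1 else -2*catalan(n-1))"
definition negf :: "real fps \<Rightarrow> real fps" where "negf F = Abs_fps (\<lambda>n. (-1)^n * F $ n)"
definition evf :: "real fps \<Rightarrow> real fps" where
  "evf F = Abs_fps (\<lambda>n. if even n then 4^(n div 2) * F $ (n div 2) else 0)"

lemma negf_mult: "negf (F*G) = negf F * negf G"
proof (rule fps_ext)
  fix n
  have "negf (F*G) $ n = (\<Sum>i=0..n. (-1)^i * F $ i * ((-1)^(n-i) * G $ (n-i)))"
    unfolding negf_def fps_mult_nth
    by (simp add: sum_distrib_left) (rule sum.cong, auto simp: power_add[symmetric])
  then show "negf (F*G) $ n = (negf F * negf G) $ n"
    by (simp add: negf_def fps_mult_nth mult.assoc)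
qed

lemma evf_mult: "evf (F*G) = evf F * evf G"
proof (rule fps_ext)
  fix n
  show "evf (F*G) $ n = (evf F * evf G) $ n"
  proof (cases "even n")
    case False
    have "(evf F * evf G) $ n = (\<Sum>i=0..n. 0)"
      unfolding fps_mult_nth evf_def using False by (intro sum.cong) auto
    then show ?thesis using False by (simp add: evf_def)
  next
    case True
    then obtain m where n: "n = 2*m" by blast
    have "(evf F * evf G) $ n = (\<Sum>i=0..n. if even i then
         4^(i div 2) * F $ (i div 2) * (4^((n-i) div 2) * G $ ((n-i) div 2)) else 0)"
      unfolding fps_mult_nth evf_def using True by (intro sum.cong) auto
    also have "\<dots> = (\<Sum>j=0..m. 4^j * F $ j * (4^(m-j) * G $ (m-j)))"
      unfolding sum_even n by (intro sum.cong) (auto simp: diff_mult_distrib2[symmetric])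
    also have "\<dots> = (\<Sum>j=0..m. 4^m * (F $ j * G $ (m-j)))"
      by (intro sum.cong refl) (auto simp: power_add[symmetric])
    also have "\<dots> = evf (F*G) $ n"
      by (simp add: evf_def n fps_mult_nth sum_distrib_left)
    finally show ?thesis ..
  qed
qed

definition S :: "real fps" where "S = Abs_fps sc"

lemma num_mult_nth [simp]: "(numeral k * F) $ n = numeral k * (F $ n :: 'a::comm_ring_1)"
  by (simp add: numeral_fps_const)
lemma mult_num_nth [simp]: "(F * numeral k) $ n = (F $ n :: 'a::comm_ring_1) * numeral k"
  by (simp add: numeral_fps_const)

lemma lin_nth: "((1 - 4*fps_X) * (F::real fps)) $ n = F $ n - 4 * (if n = 0 then 0 else F $ (n-1))"
proof -
  have "(1 - 4*fps_X) * F = F - 4 * (fps_X * F)" by (simp add: algebra_simps)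
  then show ?thesis by simp
qed

lemma S_ode: "(1 - 4*fps_X) * fps_deriv S = -2 * S"
proof (rule fps_ext)
  fix n
  show "((1 - 4*fps_X) * fps_deriv S) $ n = (-2 * S) $ n"
  proof (cases n)
    case 0 then show ?thesis by (simp add: lin_nth S_def sc_def catalan_def)
  next
    case (Suc k)
    have r: "real (k+2) * catalan (k+1) = 2*(2*real k+1) * catalan k" by (rule catalan_rec)
    show ?thesis unfolding lin_nth using Suc r
      by (simp add: S_def sc_def algebra_simps)
  qed
qed

lemma ode_zero:
  assumes "(1 - 4*fps_X) * fps_deriv H = -4 * (H :: real fps)" "H $ 0 = 0"
  shows "H = 0"
proof (rule fps_ext)
  fix n
  have c: "real (n+1) * H $ (n+1) - 4 * (if n = 0 then 0 else real n * H $ n) = -4 * H $ n" for n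
    using arg_cong[OF assms(1), of "\<lambda>F. F $ n"] unfolding lin_nth by (simp add: algebra_simps)
  show "H $ n = 0 $ n"
  proof (induction n)
    case 0 then show ?case using assms(2) by simp
  next
    case (Suc n)
    then have "real (n+1) * H $ (n+1) = 0" using c[of n] by (auto split: if_splits)
    then show ?case by simp
  qed
qed

lemma S_sq: "S * S = 1 - 4*fps_X"
proof -
  define H where "H = S * S - (1 - 4*fps_X)"
  have "(1 - 4*fps_X) * fps_deriv H = 2 * S * ((1 - 4*fps_X) * fps_deriv S) + 4*(1 - 4*fps_X)"
    by (simp add: H_def algebra_simps)
  also have "\<dots> = -4 * H" unfolding S_ode H_def by (simp add: algebra_simps)
  finally have "H = 0" by (rule ode_zero) (simp add: H_def S_def sc_def)
  then show ?thesis by (simp add: H_def)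
qed

definition Cf :: "real fps" where "Cf = Abs_fps catalan"
definition Ce :: "real fps" where "Ce = Abs_fps (\<lambda>n. if even n then catalan n else 0)"

lemma Cf_eq: "2 * (fps_X * Cf) = 1 - S"
  by (rule fps_ext) (auto simp: Cf_def S_def sc_def)

lemma negf_lin: "negf (1 - 4*fps_X) = 1 + 4*fps_X"
  by (rule fps_ext) (auto simp: negf_def fps_numeral_nth le_Suc_eq)

lemma cancel_num: "numeral k * A = numeral k * (B::real fps) \<Longrightarrow> A = B"
  by (metis mult_cancel_left numeral_neq_fps_zero)

lemma evf_lin: "evf (1 - 4*fps_X) = 1 - 16*fps_X^2"
proof (rule fps_ext)
  fix n
  have "(fps_X^2 :: real fps) $ n = (if n = 2 then 1 else 0)"
    by (simp add: fps_X_power_nth)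
  moreover have "(1 - 4 * fps_X :: real fps) $ k = (if k = 0 then 1 else if k = 1 then -4 else 0)" for k
    by (simp add: fps_numeral_nth)
  ultimately show "evf (1 - 4*fps_X) $ n = (1 - 16*fps_X^2) $ n"
    unfolding evf_def by (auto elim!: evenE)
qed

lemma Sn_sq: "negf S * negf S = 1 + 4*fps_X"
  by (simp add: negf_mult[symmetric] S_sq negf_lin)

lemma T_sq: "evf S * evf S = 1 - 16*fps_X^2"
  by (simp add: evf_mult[symmetric] S_sq evf_lin)

lemma P_eq: "S * negf S = evf S"
proof -
  have "(S * negf S - evf S) * (S * negf S + evf S) = (S*S) * (negf S * negf S) - evf S * evf S"
    by (simp add: algebra_simps)
  also have "\<dots> = 0" unfolding S_sq Sn_sq T_sq by (simp add: algebra_simps power2_eq_square)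
  finally have "S * negf S - evf S = 0 \<or> S * negf S + evf S = 0" by simp
  moreover have "(S * negf S + evf S) $ 0 \<noteq> 0"
    by (simp add: S_def sc_def negf_def evf_def)
  ultimately show ?thesis by (metis eq_iff_diff_eq_0 fps_zero_nth)
qed

lemma Ce_eq: "4 * (fps_X * Ce) = negf S - S"
proof -
  have c: "2 * Ce = Cf + negf Cf"
    by (rule fps_ext) (auto simp: Ce_def Cf_def negf_def)
  have n: "negf (2 * (fps_X * Cf)) = - 2 * (fps_X * negf Cf)"
  proof (rule fps_ext)
    fix k show "negf (2 * (fps_X * Cf)) $ k = (- 2 * (fps_X * negf Cf)) $ k"
      by (cases k) (simp_all add: negf_def)
  qed
  have o: "negf (1 - S) = 1 - negf S"
  proof (rule fps_ext)
    fix k show "negf (1 - S) $ k = (1 - negf S) $ k"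
      by (cases k) (simp_all add: negf_def)
  qed
  have m: "- 2 * (fps_X * negf Cf) = 1 - negf S"
    unfolding n[symmetric] Cf_eq o ..
  have "4 * (fps_X * Ce) = 2 * (fps_X * (2 * Ce))" by (simp add: algebra_simps)
  also have "\<dots> = 2 * (fps_X * Cf) - (- 2 * (fps_X * negf Cf))" unfolding c
    by (simp add: algebra_simps)
  also have "\<dots> = negf S - S" unfolding m Cf_eq by simp
  finally show ?thesis .
qed

lemma Ce_sq: "8 * (fps_X^2 * (Ce * Ce)) = 1 - evf S"
proof -
  have "16 * (fps_X^2 * (Ce * Ce)) = (4 * (fps_X * Ce)) * (4 * (fps_X * Ce))"
    by (simp add: algebra_simps power2_eq_square)
  also have "\<dots> = negf S * negf S + S * S - 2 * (S * negf S)"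
    unfolding Ce_eq by (simp add: algebra_simps)
  also have "\<dots> = 2 * (1 - evf S)" unfolding Sn_sq S_sq P_eq by (simp add: algebra_simps)
  finally have "2 * (8 * (fps_X^2 * (Ce * Ce))) = 2 * (1 - evf S)" by simp
  then show ?thesis by (rule cancel_num)
qed

lemma Cf_sq: "fps_X * (Cf * Cf) = Cf - 1"
proof -
  have "fps_X * (4 * (fps_X * (Cf * Cf))) = (2 * (fps_X * Cf)) * (2 * (fps_X * Cf))"
    by (simp add: algebra_simps)
  also have "\<dots> = 1 - 2 * S + S * S" unfolding Cf_eq by (simp add: algebra_simps)
  also have "\<dots> = 2 * (2 * (fps_X * Cf)) - 4 * fps_X" unfolding S_sq Cf_eq by (simp add: algebra_simps)
  also have "\<dots> = fps_X * (4 * (Cf - 1))" by (simp add: algebra_simps)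
  finally have "fps_X * (4 * (fps_X * (Cf * Cf))) = fps_X * (4 * (Cf - 1))" .
  then have "4 * (fps_X * (Cf * Cf)) = 4 * (Cf - 1)" by (simp only: mult_cancel_left fps_X_neq_zero) simp
  then show ?thesis by (rule cancel_num)
qed

lemma segner: "(\<Sum>l=0..n. catalan (n-l) * catalan l) = catalan (n+1)"
proof -
  have "(fps_X * (Cf * Cf)) $ (n+1) = (Cf - 1) $ (n+1)" by (simp only: Cf_sq)
  then have "(Cf * Cf) $ n = catalan (n+1)" by (simp add: Cf_def)
  then have "(\<Sum>i=0..n. catalan i * catalan (n-i)) = catalan (n+1)"
    by (simp only: fps_mult_nth) (simp add: Cf_def)
  then show ?thesis by (simp add: mult.commute)
qed

lemma even_conv: "(\<Sum>j=0..m. catalan (2*m - 2*j) * catalan (2*j)) = 4^m * catalan m"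
proof -
  have "(8 * (fps_X^2 * (Ce * Ce))) $ (2*m+2) = (1 - evf S) $ (2*m+2)" by (simp only: Ce_sq)
  then have "8 * (Ce * Ce) $ (2*m) = 4^(m+1) * 2 * catalan m"
    by (simp add: fps_X_power_mult_nth evf_def S_def sc_def)
  then have a: "(Ce * Ce) $ (2*m) = 4^m * catalan m" by simp
  have "(Ce * Ce) $ (2*m) = (\<Sum>i=0..2*m. if even i then catalan i * catalan (2*m-i) else 0)"
    unfolding fps_mult_nth Ce_def by (intro sum.cong) auto
  also have "\<dots> = (\<Sum>j=0..m. catalan (2*j) * catalan (2*m - 2*j))"
    by (simp add: sum_even)
  finally show ?thesis using a by (simp add: mult.commute)
qed

lemma E_even: "E (2*m) = 4^m * catalan m / catalan (2*m+1)"
  unfolding E_def using even_conv[of m] segner[of "2*m"] by simp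

lemma E_odd: "E (2*m+1) = 1/2"
proof -
  define n where "n = 2*m+1"
  define f where "f l = catalan (n-l) * catalan l" for l
  have num: "(\<Sum>j=0..n div 2. catalan (n - 2*j) * catalan (2*j)) = (\<Sum>l=0..n. if even l then f l else 0)"
    by (simp add: sum_even f_def)
  have nodd: "odd n" by (simp add: n_def)
  have fr: "f (n-l) = f l" if "l \<le> n" for l using that by (simp add: f_def mult.commute)
  have pr: "odd (n-l) = even l" if "l \<le> n" for l using that unfolding n_def by presburger
  have od: "(\<Sum>l=0..n. if odd l then f l else 0) = (\<Sum>l=0..n. if even l then f l else 0)"
    by (rule sum.reindex_bij_witness[where i="\<lambda>l. n-l" and j="\<lambda>l. n-l"]) (auto simp: fr pr nodd)
  have "(\<Sum>l=0..n. f l) = (\<Sum>l=0..n. if even l then f l else 0) + (\<Sum>l=0..n. if odd l then f l else 0)"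
    unfolding sum.distrib[symmetric] by (intro sum.cong) auto
  then have den: "(\<Sum>l=0..n. f l) = 2 * (\<Sum>l=0..n. if even l then f l else 0)" using od by simp
  have pos: "(\<Sum>l=0..n. f l) > 0" unfolding f_def by (intro sum_pos) (auto simp: catalan_pos)
  show ?thesis unfolding E_def n_def[symmetric] num using den pos f_def
    by (simp add: field_simps)
qed

lemma step_ineq: "E (2*(m+1)) < E (2*m)"
proof -
  define x where "x = real m"
  define a where "a = catalan m"
  define b where "b = catalan (2*m+1)"
  define C1 where "C1 = catalan (m+1)"
  define C2 where "C2 = catalan (2*m+2)"
  define C3 where "C3 = catalan (2*m+3)"
  have h1: "(x+2)*C1 = 2*(2*x+1)*a" using catalan_rec[of m] unfolding x_def C1_def a_def by (simp add: algebra_simps)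
  have h2: "(2*x+3)*C2 = 2*(4*x+3)*b" using catalan_rec[of "2*m+1"]
    by (simp add: x_def C2_def b_def algebra_simps)
  have h3: "(2*x+4)*C3 = 2*(4*x+5)*C2" using catalan_rec[of "2*m+2"]
    by (simp add: x_def C2_def C3_def algebra_simps eval_nat_numeral)
  have x0: "x \<ge> 0" by (simp add: x_def)
  have pa: "a > 0" "b > 0" "C3 > 0" by (simp_all add: a_def b_def C3_def catalan_pos)
  define K where "K = (x+2)*(2*x+3)*(2*x+4)"
  have K0: "K > 0" unfolding K_def using x0 by simp
  have L: "K*(4*C1*b) = 8*(2*x+1)*(2*x+3)*(2*x+4)*(a*b)"
  proof -
    have "K*(4*C1*b) = ((x+2)*C1)*(4*(2*x+3)*(2*x+4)*b)" by (simp add: K_def algebra_simps)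
    then show ?thesis unfolding h1 by (simp add: algebra_simps)
  qed
  have R: "K*(a*C3) = 4*(x+2)*(4*x+5)*(4*x+3)*(a*b)"
  proof -
    have "K*(a*C3) = (x+2)*a*((2*x+4)*C3)*(2*x+3)" by (simp add: K_def algebra_simps)
    also have "\<dots> = (x+2)*a*2*(4*x+5)*((2*x+3)*C2)" unfolding h3 by (simp add: algebra_simps)
    also have "\<dots> = 4*(x+2)*(4*x+5)*(4*x+3)*(a*b)" unfolding h2 by (simp add: algebra_simps)
    finally show ?thesis .
  qed
  have d: "4*(x+2)*(4*x+5)*(4*x+3) - 8*(2*x+1)*(2*x+3)*(2*x+4) = 12*(x+2)"
    by (simp add: algebra_simps)
  have "8*(2*x+1)*(2*x+3)*(2*x+4)*(a*b) < 4*(x+2)*(4*x+5)*(4*x+3)*(a*b)"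
    using d x0 pa by (intro mult_strict_right_mono) auto
  then have "K*(4*C1*b) < K*(a*C3)" unfolding L R .
  then have m: "4*C1*b < a*C3" using K0 by simp
  have "E (2*(m+1)) = 4^m*(4*C1)/C3" unfolding E_even C1_def C3_def by (simp add: algebra_simps eval_nat_numeral)
  also have "\<dots> < 4^m*a/b" using m pa by (simp add: field_simps)
  also have "\<dots> = E (2*m)" unfolding E_even a_def b_def by simp
  finally show ?thesis .
qed

lemma E_anti: "m1 < m2 \<Longrightarrow> E (2*m2) < E (2*m1)"
  using lift_Suc_mono_less[of "\<lambda>m. - E (2*m)" m1 m2] step_ineq by simp

lemma E4: "E 4 = 16/21"
proof -
  have c0: "catalan 0 = 1" by (simp add: catalan_def)
  have c1: "catalan 1 = 1" using catalan_rec[of 0] c0 by (simp add: eval_nat_numeral)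
  have c2: "catalan 2 = 2" using catalan_rec[of 1] c1 by (simp add: eval_nat_numeral)
  have c3: "catalan 3 = 5" using catalan_rec[of 2] c2 by (simp add: eval_nat_numeral)
  have c4: "catalan 4 = 14" using catalan_rec[of 3] c3 by (simp add: eval_nat_numeral)
  have c5: "catalan 5 = 42" using catalan_rec[of 4] c4 by (simp add: eval_nat_numeral)
  show ?thesis using E_even[of 2] c2 c5 by simp
qed

theorem mainTheorem4:
  shows "(\<forall>m1 m2::nat. m1 < m2 \<longrightarrow> E (2*m2) < E (2*m1))
       \<and> (\<forall>m::nat. E (2*m+1) = 1/2)
       \<and> max (E 4) (1/2) = E 4
       \<and> (\<forall>m::nat. m \<ge> 4 \<longrightarrow> E m \<le> max (E 4) (1/2))"
proof (intro conjI allI impI)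
  fix m1 m2 :: nat assume "m1 < m2" then show "E (2*m2) < E (2*m1)" by (rule E_anti)
next
  fix m :: nat show "E (2*m+1) = 1/2" by (rule E_odd)
next
  show mx: "max (E 4) (1/2) = E 4" using E4 by simp
next
  fix m :: nat assume m4: "m \<ge> 4"
  show "E m \<le> max (E 4) (1/2)"
  proof (cases "even m")
    case True
    then obtain k where k: "m = 2*k" by blast
    have k2: "k \<ge> 2" using m4 k by simp
    have "E m \<le> E 4"
    proof (cases "k = 2")
      case True then show ?thesis using k by simp
    next
      case False
      then have "2 < k" using k2 by simp
      then have "E (2*k) < E (2*2)" by (rule E_anti)
      then show ?thesis using k by simp
    qed
    then show ?thesis by (rule max.coboundedI1)
  next
    case False
    then obtain k where k: "m = 2*k+1" by (metis oddE)
    have "E m = 1/2" using E_odd[of k] k by simp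
    then show ?thesis by (simp only: max.cobounded2)
  qed
qed

end
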